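(* Let $I_3>0$, $g\in\mathbb{R}$, $a>0$, $b\neq 0$, and let $I_1(t)=a+bt$, considered on the time interval where $a+bt>0$. Consider the time-dependent Hamiltonian (Lagrange top in gravity with linearly time-dependent moment of inertia), in Euler angles $(\phi,\theta,\psi)$, $\theta\in(0,\pi)$, with conjugate momenta $(p_\phi,p_\theta,p_\psi)$: \[ H=\frac{1}{2I_1(t)}\Big(p_\theta^2+\frac{p_\phi^2+p_\psi^2-2p_\phi p_\psi\cos\theta}{\sin^2\theta}\Big)+\frac12\Big(\frac1{I_3}-\frac1{I_1(t)}\Big)p_\psi^2+g\cos\theta . \] Along any solution of Hamilton's equations, $p_\phi,p_\psi$ are constant, and with the new time $\tau=\log\big((a+bt)/a\big)$ (so that $I_1(t)=ae^{\tau}$) the function $y(\tau):=\theta(t)$ satisfies the trigonometric form of the degenerate fifth Painlevé equation \[ \frac{d^2y}{d\tau^2}=-\frac{\partial V}{\partial y},\qquad V(y,\tau)=-\frac{\kappa_\infty^2}{2\sin^2(y/2)}-\frac{\kappa_0^2}{2\cos^2(y/2)}-\frac{\gamma e^{\tau}}{2}\cos y, \] (i.e.\ $\delta=0$) with $\kappa_0^2=-\dfrac{(p_\phi+p_\psi)^2}{4b^2}$, $\kappa_\infty^2=-\dfrac{(p_\phi-p_\psi)^2}{4b^2}$, $\gamma=-\dfrac{2ag}{b^2}$. Conversely, the equation of motion of $\theta$ is equivalent to this equation.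
   Context: Hamilton's equations are $\dot q=\partial H/\partial p$, $\dot p=-\partial H/\partial q$ for each conjugate pair, with $\dot{}=d/dt$. The trigonometric form of $P_V$ with general $\delta$ has potential $V$ with the additional term $-\frac{\delta e^{2\tau}}{4}\cos^2y$; via $w=-\cot^2(y/2)$, $\zeta=e^\tau$ it is equivalent to the fifth Painlevé equation with $\alpha=\kappa_\infty^2/2$, $\beta=-\kappa_0^2/2$; the case $\delta=0$ is the degenerate fifth Painlevé equation. *)

theory Defs
  imports "HOL-Analysis.Analysis"
begin

definition I1 :: "real \<Rightarrow> real \<Rightarrow> real \<Rightarrow> real" where
  "I1 a b t = a + b * t"

definition Ham :: "real \<Rightarrow> real \<Rightarrow> real \<Rightarrow> real \<Rightarrow> real \<Rightarrow>
    real \<Rightarrow> real \<Rightarrow> real \<Rightarrow> real \<Rightarrow> real \<Rightarrow> real \<Rightarrow> real" where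
  "Ham I3 g a b t ph th ps pph pth pps =
     1 / (2 * I1 a b t) * (pth ^ 2 + (pph ^ 2 + pps ^ 2 - 2 * pph * pps * cos th) / (sin th) ^ 2)
     + 1 / 2 * (1 / I3 - 1 / I1 a b t) * pps ^ 2 + g * cos th"

definition hamilton_solution ::
  "real \<Rightarrow> real \<Rightarrow> real \<Rightarrow> real \<Rightarrow> real set \<Rightarrow> (real \<Rightarrow> real) \<Rightarrow> (real \<Rightarrow> real) \<Rightarrow>
   (real \<Rightarrow> real) \<Rightarrow> (real \<Rightarrow> real) \<Rightarrow> (real \<Rightarrow> real) \<Rightarrow> (real \<Rightarrow> real) \<Rightarrow> bool" where
  "hamilton_solution I3 g a b T ph th ps pph pth pps \<longleftrightarrow>
    (\<forall>t\<in>T. th t \<in> {0<..<pi} \<and>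
      (ph has_real_derivative
         deriv (\<lambda>p. Ham I3 g a b t (ph t) (th t) (ps t) p (pth t) (pps t)) (pph t)) (at t) \<and>
      (th has_real_derivative
         deriv (\<lambda>p. Ham I3 g a b t (ph t) (th t) (ps t) (pph t) p (pps t)) (pth t)) (at t) \<and>
      (ps has_real_derivative
         deriv (\<lambda>p. Ham I3 g a b t (ph t) (th t) (ps t) (pph t) (pth t) p) (pps t)) (at t) \<and>
      (pph has_real_derivative
         - deriv (\<lambda>q. Ham I3 g a b t q (th t) (ps t) (pph t) (pth t) (pps t)) (ph t)) (at t) \<and>
      (pth has_real_derivative
         - deriv (\<lambda>q. Ham I3 g a b t (ph t) q (ps t) (pph t) (pth t) (pps t)) (th t)) (at t) \<and>
      (pps has_real_derivative
         - deriv (\<lambda>q. Ham I3 g a b t (ph t) (th t) q (pph t) (pth t) (pps t)) (ps t)) (at t))"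

text \<open>H does not depend on phi, psi, so their
  values (here 0) are irrelevant.\<close>
definition theta_motion ::
  "real \<Rightarrow> real \<Rightarrow> real \<Rightarrow> real \<Rightarrow> real set \<Rightarrow> real \<Rightarrow> real \<Rightarrow>
   (real \<Rightarrow> real) \<Rightarrow> (real \<Rightarrow> real) \<Rightarrow> bool" where
  "theta_motion I3 g a b T cph cps th pth \<longleftrightarrow>
    (\<forall>t\<in>T.
      (th has_real_derivative
         deriv (\<lambda>p. Ham I3 g a b t 0 (th t) 0 cph p cps) (pth t)) (at t) \<and>
      (pth has_real_derivative
         - deriv (\<lambda>q. Ham I3 g a b t 0 q 0 cph (pth t) cps) (th t)) (at t))"

definition new_time :: "real \<Rightarrow> real \<Rightarrow> real \<Rightarrow> real" where
  "new_time a b t = ln ((a + b * t) / a)"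

definition old_time :: "real \<Rightarrow> real \<Rightarrow> real \<Rightarrow> real" where
  "old_time a b \<tau> = a * (exp \<tau> - 1) / b"

text \<open>Potential of the trigonometric degenerate P_V (delta = 0); k0sq, kinfsq stand for
  kappa_0^2, kappa_infinity^2 (arbitrary real numbers, possibly negative).\<close>
definition V_PV :: "real \<Rightarrow> real \<Rightarrow> real \<Rightarrow> real \<Rightarrow> real \<Rightarrow> real" where
  "V_PV k0sq kinfsq gam y \<tau> =
     - kinfsq / (2 * (sin (y / 2)) ^ 2) - k0sq / (2 * (cos (y / 2)) ^ 2) - gam * exp \<tau> / 2 * cos y"

definition solves_PV :: "real \<Rightarrow> real \<Rightarrow> real \<Rightarrow> real set \<Rightarrow> (real \<Rightarrow> real) \<Rightarrow> bool" where
  "solves_PV k0sq kinfsq gam S y \<longleftrightarrow>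
    (\<exists>y'. \<forall>\<tau>\<in>S. (y has_real_derivative y' \<tau>) (at \<tau>) \<and>
       (y' has_real_derivative - deriv (\<lambda>u. V_PV k0sq kinfsq gam u \<tau>) (y \<tau>)) (at \<tau>))"

end

theory Submission
  imports Defs
begin


definition DV :: "real \<Rightarrow> real \<Rightarrow> real \<Rightarrow> real \<Rightarrow> real \<Rightarrow> real" where
 "DV k0 ki gam u \<tau> = ki * cos (u/2) / (2 * sin (u/2) ^ 3) - k0 * sin (u/2) / (2 * cos (u/2) ^ 3)
    + gam * exp \<tau> / 2 * sin u"

lemma dV: assumes "sin (u/2) \<noteq> 0" "cos (u/2) \<noteq> 0"
  shows "((\<lambda>u. V_PV k0 ki gam u \<tau>) has_real_derivative DV k0 ki gam u \<tau>) (at u)"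
  unfolding V_PV_def DV_def
  apply (rule derivative_eq_intros refl | simp add: assms)+
  using assms apply (simp add: field_simps)
  by algebra

lemma half_nz: assumes "sin (u::real) \<noteq> 0" shows "sin (u/2) \<noteq> 0" "cos (u/2) \<noteq> 0"
proof -
  have "sin u = 2 * sin (u/2) * cos (u/2)" using sin_double[of "u/2"] by simp
  thus "sin (u/2) \<noteq> 0" "cos (u/2) \<noteq> 0" using assms by auto
qed

lemma pointwise: fixes q b x z :: real assumes "sin q \<noteq> 0" "b \<noteq> 0"
  shows "(x^2 + z^2 - 2*x*z*cos q) / (sin q)^2 =
    2 * b^2 * (- (- ((x - z) ^ 2) / (4 * b ^ 2)) / (2 * (sin (q / 2)) ^ 2)
               - (- ((x + z) ^ 2) / (4 * b ^ 2)) / (2 * (cos (q / 2)) ^ 2))"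
proof -
  define h where "h = q/2"
  have q: "q = 2*h" by (simp add: h_def)
  have s: "sin h \<noteq> 0" "cos h \<noteq> 0" using half_nz[OF assms(1)] by (auto simp: h_def)
  have sq: "sin h ^ 2 + cos h ^ 2 = 1" by simp
  show ?thesis unfolding q sin_double cos_double h_def[symmetric]
    using s assms(2)
    apply (simp add: field_simps)
    using sq by algebra
qed



lemma dH_th:
  fixes I3 g a b t ph ps pph pth pps th \<tau> :: real
  assumes "sin th \<noteq> 0" "b \<noteq> 0" "I1 a b t \<noteq> 0"
  shows "((\<lambda>q. Ham I3 g a b t ph q ps pph pth pps) has_real_derivative
     (b^2 / I1 a b t) * (DV (- ((pph + pps) ^ 2) / (4 * b ^ 2)) (- ((pph - pps) ^ 2) / (4 * b ^ 2))
        (- 2 * a * g / b ^ 2) th \<tau> - (- 2 * a * g / b ^ 2) * exp \<tau> / 2 * sin th) - g * sin th) (at th)"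
proof -
  define k0 where "k0 = - ((pph + pps) ^ 2) / (4 * b ^ 2)"
  define ki where "ki = - ((pph - pps) ^ 2) / (4 * b ^ 2)"
  define gam where "gam = - 2 * a * g / b ^ 2"
  define I where "I = I1 a b t"
  define F where "F = (\<lambda>q. pth^2/(2*I) + 1/2*(1/I3 - 1/I)*pps^2
      + (b^2/I) * (V_PV k0 ki gam q \<tau> + gam * exp \<tau> / 2 * cos q) + g * cos q)"
  have hz: "sin (th/2) \<noteq> 0" "cos (th/2) \<noteq> 0" using half_nz[OF assms(1)] by auto
  have "(F has_real_derivative
      (b^2 / I) * (DV k0 ki gam th \<tau> + gam * exp \<tau> / 2 * (- sin th)) + g * (- sin th)) (at th)"
    unfolding F_def
    by (rule derivative_eq_intros dV[OF hz] refl | simp)+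
  then have D: "(F has_real_derivative
      (b^2 / I) * (DV k0 ki gam th \<tau> - gam * exp \<tau> / 2 * sin th) - g * sin th) (at th)"
    by (simp add: algebra_simps)
  have eq: "F q = Ham I3 g a b t ph q ps pph pth pps" if "q \<in> {q. sin q \<noteq> 0}" for q
  proof -
    have sq: "sin q \<noteq> 0" using that by simp
    have U: "(pph^2 + pps^2 - 2*pph*pps*cos q) / (sin q)^2 =
      2 * b^2 * (V_PV k0 ki gam q \<tau> + gam * exp \<tau> / 2 * cos q)"
      using pointwise[OF sq assms(2), of pph pps] unfolding V_PV_def k0_def ki_def by simp
    show ?thesis unfolding Ham_def F_def I_def[symmetric] U
      using assms(3) unfolding I_def[symmetric]
      by (simp add: field_simps)
  qed
  have "open {q::real. sin q \<noteq> 0}" by (intro open_Collect_neq continuous_intros)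
  from has_field_derivative_transform_within_open[OF D this _ eq] assms(1)
  show ?thesis unfolding k0_def ki_def gam_def I_def by simp
qed

lemma dH_p:
  assumes "I1 a b t \<noteq> 0"
  shows "((\<lambda>p. Ham I3 g a b t ph th ps pph p pps) has_real_derivative x / I1 a b t) (at x)"
  unfolding Ham_def
  by (rule derivative_eq_intros refl | simp)+

lemma deriv_Ham_ph: "deriv (\<lambda>q. Ham I3 g a b t q th ps pph pth pps) x = 0"
  unfolding Ham_def by simp


lemma time_facts:
  fixes a b t :: real assumes "a > 0" "b \<noteq> 0" "a + b * t > 0"
  shows "old_time a b (new_time a b t) = t" "a * exp (new_time a b t) = I1 a b t"
    "(new_time a b has_real_derivative b / I1 a b t) (at t)"
proof -
  have e: "exp (new_time a b t) = (a + b*t)/a" unfolding new_time_def using assms by simp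
  show "old_time a b (new_time a b t) = t" unfolding old_time_def e using assms by (simp add: field_simps)
  show "a * exp (new_time a b t) = I1 a b t" unfolding e I1_def using assms by simp
  show "(new_time a b has_real_derivative b / I1 a b t) (at t)" unfolding new_time_def I1_def
    using assms by (auto intro!: derivative_eq_intros simp: field_simps)
qed

lemma old_deriv: assumes "b \<noteq> 0" shows "(old_time a b has_real_derivative a * exp \<tau> / b) (at \<tau>)"
  unfolding old_time_def using assms by (auto intro!: derivative_eq_intros)

abbreviation "Dth a b g cph cps th t \<equiv>
  (b^2 / I1 a b t) * (DV (- ((cph + cps) ^ 2) / (4 * b ^ 2)) (- ((cph - cps) ^ 2) / (4 * b ^ 2))
        (- 2 * a * g / b ^ 2) (th t) (new_time a b t)
     - (- 2 * a * g / b ^ 2) * exp (new_time a b t) / 2 * sin (th t)) - g * sin (th t)"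

lemma forward_core:
  fixes a b g cph cps :: real and th pth :: "real \<Rightarrow> real"
  assumes "a > 0" "b \<noteq> 0" "T \<subseteq> {t. a + b * t > 0}"
    and sn: "\<And>t. t \<in> T \<Longrightarrow> sin (th t) \<noteq> 0"
    and th: "\<And>t. t \<in> T \<Longrightarrow> (th has_real_derivative pth t / I1 a b t) (at t)"
    and pth: "\<And>t. t \<in> T \<Longrightarrow> (pth has_real_derivative - Dth a b g cph cps th t) (at t)"
  shows "solves_PV (- ((cph + cps) ^ 2) / (4 * b ^ 2)) (- ((cph - cps) ^ 2) / (4 * b ^ 2))
                     (- 2 * a * g / b ^ 2) (new_time a b ` T) (\<lambda>\<tau>. th (old_time a b \<tau>))"
  unfolding solves_PV_def
proof (intro exI[of _ "\<lambda>\<tau>. pth (old_time a b \<tau>) / b"] ballI conjI)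
  fix \<tau> assume "\<tau> \<in> new_time a b ` T"
  then obtain t where t: "t \<in> T" and tau: "\<tau> = new_time a b t" by auto
  have pos: "a + b * t > 0" using t assms(3) by auto
  note tf = time_facts[OF assms(1,2) pos]
  have ot: "old_time a b \<tau> = t" using tf tau by simp
  have ae: "a * exp \<tau> = I1 a b t" using tf tau by simp
  have Ipos: "I1 a b t > 0" using pos by (simp add: I1_def)
  have "((\<lambda>\<tau>. th (old_time a b \<tau>)) has_real_derivative (pth t / I1 a b t) * (a * exp \<tau> / b)) (at \<tau>)"
    using DERIV_chain2[OF th[OF t, folded ot] old_deriv[OF assms(2)]] ot by simp
  then show "((\<lambda>\<tau>. th (old_time a b \<tau>)) has_real_derivative pth (old_time a b \<tau>) / b) (at \<tau>)"
    using ae Ipos ot by (simp add: field_simps)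
  have "((\<lambda>\<tau>. pth (old_time a b \<tau>)) has_real_derivative (- Dth a b g cph cps th t) * (a * exp \<tau> / b)) (at \<tau>)"
    using DERIV_chain2[OF pth[OF t, folded ot] old_deriv[OF assms(2)]] ot by simp
  then have "((\<lambda>\<tau>. pth (old_time a b \<tau>) / b) has_real_derivative (- Dth a b g cph cps th t) * (a * exp \<tau> / b) / b) (at \<tau>)"
    using assms(2) by (auto intro!: derivative_eq_intros)
  moreover have "(- Dth a b g cph cps th t) * (a * exp \<tau> / b) / b =
     - deriv (\<lambda>u. V_PV (- ((cph + cps) ^ 2) / (4 * b ^ 2)) (- ((cph - cps) ^ 2) / (4 * b ^ 2))
                     (- 2 * a * g / b ^ 2) u \<tau>) (th (old_time a b \<tau>))"
  proof -
    have hz: "sin (th t/2) \<noteq> 0" "cos (th t/2) \<noteq> 0" using half_nz[OF sn[OF t]] by auto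
    have ee: "exp \<tau> = I1 a b t / a" using ae assms(1) by (simp add: field_simps)
    show ?thesis unfolding ot
      apply (subst DERIV_imp_deriv[OF dV[OF hz]])
      unfolding tau[symmetric] ee using Ipos assms(1,2) by (simp add: field_simps power2_eq_square power4_eq_xxxx)
  qed
  ultimately show "((\<lambda>\<tau>. pth (old_time a b \<tau>) / b) has_real_derivative
     - deriv (\<lambda>u. V_PV (- ((cph + cps) ^ 2) / (4 * b ^ 2)) (- ((cph - cps) ^ 2) / (4 * b ^ 2))
                     (- 2 * a * g / b ^ 2) u \<tau>) (th (old_time a b \<tau>))) (at \<tau>)" by simp
qed

lemma deriv_Ham_ps: "deriv (\<lambda>q. Ham I3 g a b t ph th q pph pth pps) x = 0"
  unfolding Ham_def by simp

lemma deriv_th_eq: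
  assumes "sin th \<noteq> 0" "b \<noteq> 0" "a + b * t > 0"
  shows "deriv (\<lambda>q. Ham I3 g a b t ph q ps pph pth pps) th =
     (b^2 / I1 a b t) * (DV (- ((pph + pps) ^ 2) / (4 * b ^ 2)) (- ((pph - pps) ^ 2) / (4 * b ^ 2))
        (- 2 * a * g / b ^ 2) th (new_time a b t) - (- 2 * a * g / b ^ 2) * exp (new_time a b t) / 2 * sin th) - g * sin th"
  using assms by (intro DERIV_imp_deriv dH_th) (auto simp: I1_def)

lemma deriv_p_eq:
  assumes "a + b * t > 0"
  shows "deriv (\<lambda>p. Ham I3 g a b t ph th ps pph p pps) x = x / I1 a b t"
  using assms by (intro DERIV_imp_deriv dH_p) (auto simp: I1_def)

lemma backward_core:
  fixes a b g cph cps :: real and th :: "real \<Rightarrow> real"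
  assumes "a > 0" "b \<noteq> 0" "T \<subseteq> {t. a + b * t > 0}" "open T"
    and sn: "\<And>t. t \<in> T \<Longrightarrow> sin (th t) \<noteq> 0"
    and S: "solves_PV (- ((cph + cps) ^ 2) / (4 * b ^ 2)) (- ((cph - cps) ^ 2) / (4 * b ^ 2))
                     (- 2 * a * g / b ^ 2) (new_time a b ` T) (\<lambda>\<tau>. th (old_time a b \<tau>))"
  shows "\<exists>pth. theta_motion I3 g a b T cph cps th pth"
proof -
  obtain y' where y': "\<And>\<tau>. \<tau> \<in> new_time a b ` T \<Longrightarrow>
     ((\<lambda>\<tau>. th (old_time a b \<tau>)) has_real_derivative y' \<tau>) (at \<tau>) \<and>
       (y' has_real_derivative - deriv (\<lambda>u. V_PV (- ((cph + cps) ^ 2) / (4 * b ^ 2)) (- ((cph - cps) ^ 2) / (4 * b ^ 2))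
                     (- 2 * a * g / b ^ 2) u \<tau>) (th (old_time a b \<tau>))) (at \<tau>)"
    using S unfolding solves_PV_def by blast
  show ?thesis unfolding theta_motion_def
  proof (intro exI[of _ "\<lambda>t. b * y' (new_time a b t)"] ballI conjI)
    fix t assume t: "t \<in> T"
    define \<tau> where "\<tau> = new_time a b t"
    have tauS: "\<tau> \<in> new_time a b ` T" using t by (simp add: \<tau>_def)
    have pos: "a + b * t > 0" using t assms(3) by auto
    note tf = time_facts[OF assms(1,2) pos]
    have ot: "old_time a b \<tau> = t" using tf by (simp add: \<tau>_def)
    have Ipos: "I1 a b t > 0" using pos by (simp add: I1_def)
    have ee: "exp \<tau> = I1 a b t / a" using tf(2) assms(1) by (simp add: \<tau>_def field_simps)
    note Y = y'[OF tauS]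
    have "((\<lambda>s. th (old_time a b (new_time a b s))) has_real_derivative y' \<tau> * (b / I1 a b t)) (at t)"
      using DERIV_chain2[OF Y[THEN conjunct1, unfolded \<tau>_def] tf(3)] by (simp add: \<tau>_def)
    then have "(th has_real_derivative y' \<tau> * (b / I1 a b t)) (at t)"
      by (rule has_field_derivative_transform_within_open[OF _ assms(4) t])
         (use assms(3) time_facts[OF assms(1,2)] in auto)
    then show "(th has_real_derivative deriv (\<lambda>p. Ham I3 g a b t 0 (th t) 0 cph p cps) (b * y' (new_time a b t))) (at t)"
      unfolding deriv_p_eq[OF pos] using Ipos by (simp add: \<tau>_def[symmetric] field_simps)
    have "((\<lambda>s. b * y' (new_time a b s)) has_real_derivative b * ((- deriv (\<lambda>u. V_PV (- ((cph + cps) ^ 2) / (4 * b ^ 2)) (- ((cph - cps) ^ 2) / (4 * b ^ 2))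
                     (- 2 * a * g / b ^ 2) u \<tau>) (th t)) * (b / I1 a b t))) (at t)"
      using DERIV_chain2[OF Y[THEN conjunct2, unfolded \<tau>_def] tf(3)] ot
      by (auto intro!: derivative_eq_intros simp: \<tau>_def)
    moreover have "b * ((- deriv (\<lambda>u. V_PV (- ((cph + cps) ^ 2) / (4 * b ^ 2)) (- ((cph - cps) ^ 2) / (4 * b ^ 2))
                     (- 2 * a * g / b ^ 2) u \<tau>) (th t)) * (b / I1 a b t)) =
        - deriv (\<lambda>q. Ham I3 g a b t 0 q 0 cph (b * y' (new_time a b t)) cps) (th t)"
    proof -
      have hz: "sin (th t/2) \<noteq> 0" "cos (th t/2) \<noteq> 0" using half_nz[OF sn[OF t]] by auto
      show ?thesis
        unfolding deriv_th_eq[OF sn[OF t] assms(2) pos] DERIV_imp_deriv[OF dV[OF hz]]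
        unfolding \<tau>_def[symmetric] ee using Ipos assms(1,2)
        by (simp add: field_simps power2_eq_square power4_eq_xxxx)
    qed
    ultimately show "((\<lambda>s. b * y' (new_time a b s)) has_real_derivative
        - deriv (\<lambda>q. Ham I3 g a b t 0 q 0 cph (b * y' (new_time a b t)) cps) (th t)) (at t)" by simp
  qed
qed



theorem theorem2:
  fixes I3 g a b :: real and T :: "real set"
  assumes "I3 > 0" and "a > 0" and "b \<noteq> 0"
    and "open T" and "is_interval T" and "T \<subseteq> {t. a + b * t > 0}"
  shows
    "(\<forall>ph th ps pph pth pps. hamilton_solution I3 g a b T ph th ps pph pth pps \<longrightarrow>
        (\<exists>cph cps. (\<forall>t\<in>T. pph t = cph \<and> pps t = cps) \<and>
           solves_PV (- ((cph + cps) ^ 2) / (4 * b ^ 2)) (- ((cph - cps) ^ 2) / (4 * b ^ 2))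
                     (- 2 * a * g / b ^ 2) (new_time a b ` T) (\<lambda>\<tau>. th (old_time a b \<tau>))))
     \<and> (\<forall>cph cps th. (\<forall>t\<in>T. th t \<in> {0<..<pi}) \<longrightarrow>
        ((\<exists>pth. theta_motion I3 g a b T cph cps th pth) \<longleftrightarrow>
         solves_PV (- ((cph + cps) ^ 2) / (4 * b ^ 2)) (- ((cph - cps) ^ 2) / (4 * b ^ 2))
                   (- 2 * a * g / b ^ 2) (new_time a b ` T) (\<lambda>\<tau>. th (old_time a b \<tau>))))"
proof (intro conjI allI impI)
  have sinpos: "sin x \<noteq> 0" if "x \<in> {0<..<pi}" for x :: real
    using that sin_gt_zero by force
  fix ph th ps pph pth pps
  assume H: "hamilton_solution I3 g a b T ph th ps pph pth pps"
  have cvx: "convex T" using assms(5) by (simp add: is_interval_convex_1)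
  have "\<exists>c. \<forall>t\<in>T. pph t = c"
  proof (rule has_field_derivative_zero_constant[OF cvx])
    fix t assume "t \<in> T"
    then have "(pph has_real_derivative 0) (at t)"
      using H unfolding hamilton_solution_def deriv_Ham_ph by simp
    then show "(pph has_field_derivative 0) (at t within T)" by (rule has_field_derivative_at_within)
  qed
  then obtain cph where cph: "\<forall>t\<in>T. pph t = cph" by blast
  have "\<exists>c. \<forall>t\<in>T. pps t = c"
  proof (rule has_field_derivative_zero_constant[OF cvx])
    fix t assume "t \<in> T"
    then have "(pps has_real_derivative 0) (at t)"
      using H unfolding hamilton_solution_def deriv_Ham_ps by simp
    then show "(pps has_field_derivative 0) (at t within T)" by (rule has_field_derivative_at_within)
  qed
  then obtain cps where cps: "\<forall>t\<in>T. pps t = cps" by blast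
  show "\<exists>cph cps. (\<forall>t\<in>T. pph t = cph \<and> pps t = cps) \<and>
           solves_PV (- ((cph + cps) ^ 2) / (4 * b ^ 2)) (- ((cph - cps) ^ 2) / (4 * b ^ 2))
                     (- 2 * a * g / b ^ 2) (new_time a b ` T) (\<lambda>\<tau>. th (old_time a b \<tau>))"
  proof (intro exI conjI)
    show "\<forall>t\<in>T. pph t = cph \<and> pps t = cps" using cph cps by simp
    show "solves_PV (- ((cph + cps) ^ 2) / (4 * b ^ 2)) (- ((cph - cps) ^ 2) / (4 * b ^ 2))
                     (- 2 * a * g / b ^ 2) (new_time a b ` T) (\<lambda>\<tau>. th (old_time a b \<tau>))"
    proof (rule forward_core[OF assms(2,3,6)])
      fix t assume t: "t \<in> T"
      have pos: "a + b * t > 0" using t assms(6) by auto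
      have s: "sin (th t) \<noteq> 0" using H t sinpos unfolding hamilton_solution_def by blast
      then show "sin (th t) \<noteq> 0" .
      have "(th has_real_derivative deriv (\<lambda>p. Ham I3 g a b t (ph t) (th t) (ps t) (pph t) p (pps t)) (pth t)) (at t)"
        using H t unfolding hamilton_solution_def by blast
      then show "(th has_real_derivative pth t / I1 a b t) (at t)"
        by (simp only: deriv_p_eq[OF pos])
      have "(pth has_real_derivative - deriv (\<lambda>q. Ham I3 g a b t (ph t) q (ps t) (pph t) (pth t) (pps t)) (th t)) (at t)"
        using H t unfolding hamilton_solution_def by blast
      then have "(pth has_real_derivative - deriv (\<lambda>q. Ham I3 g a b t (ph t) q (ps t) cph (pth t) cps) (th t)) (at t)"
        using cph cps t by simp
      then show "(pth has_real_derivative - Dth a b g cph cps th t) (at t)"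
        by (simp only: deriv_th_eq[OF s assms(3) pos])
    qed
  qed
next
  have sinpos: "sin x \<noteq> 0" if "x \<in> {0<..<pi}" for x :: real
    using that sin_gt_zero by force
  fix cph cps th
  assume R: "\<forall>t\<in>T. th t \<in> {0<..<pi}"
  have sn: "\<And>t. t \<in> T \<Longrightarrow> sin (th t) \<noteq> 0" using R sinpos by blast
  show "(\<exists>pth. theta_motion I3 g a b T cph cps th pth) \<longleftrightarrow>
         solves_PV (- ((cph + cps) ^ 2) / (4 * b ^ 2)) (- ((cph - cps) ^ 2) / (4 * b ^ 2))
                   (- 2 * a * g / b ^ 2) (new_time a b ` T) (\<lambda>\<tau>. th (old_time a b \<tau>))"
  proof
    assume "\<exists>pth. theta_motion I3 g a b T cph cps th pth"
    then obtain pth where M: "theta_motion I3 g a b T cph cps th pth" by blast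
    show "solves_PV (- ((cph + cps) ^ 2) / (4 * b ^ 2)) (- ((cph - cps) ^ 2) / (4 * b ^ 2))
                   (- 2 * a * g / b ^ 2) (new_time a b ` T) (\<lambda>\<tau>. th (old_time a b \<tau>))"
    proof (rule forward_core[OF assms(2,3,6) sn])
      fix t assume t: "t \<in> T"
      have pos: "a + b * t > 0" using t assms(6) by auto
      have "(th has_real_derivative deriv (\<lambda>p. Ham I3 g a b t 0 (th t) 0 cph p cps) (pth t)) (at t)"
        using M t unfolding theta_motion_def by blast
      then show "(th has_real_derivative pth t / I1 a b t) (at t)"
        by (simp only: deriv_p_eq[OF pos])
      have "(pth has_real_derivative - deriv (\<lambda>q. Ham I3 g a b t 0 q 0 cph (pth t) cps) (th t)) (at t)"
        using M t unfolding theta_motion_def by blast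
      then show "(pth has_real_derivative - Dth a b g cph cps th t) (at t)"
        by (simp only: deriv_th_eq[OF sn[OF t] assms(3) pos])
    qed
  next
    assume SP: "solves_PV (- ((cph + cps) ^ 2) / (4 * b ^ 2)) (- ((cph - cps) ^ 2) / (4 * b ^ 2))
                   (- 2 * a * g / b ^ 2) (new_time a b ` T) (\<lambda>\<tau>. th (old_time a b \<tau>))"
    show "\<exists>pth. theta_motion I3 g a b T cph cps th pth"
      apply (rule backward_core[OF assms(2,3,6,4), where th=th and g=g and cph=cph and cps=cps])
       apply (erule sn)
      by (rule SP)
  qed
qed

end
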